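(* Let $\Gamma=(V_\Gamma,E_\Gamma)$ be a simple triangular grid graph, let $u,v\in V_\Gamma$, and let $\mathcal U_{uv}\subseteq V_\Gamma$ be the set of all nodes that lie on at least one shortest $uv$-path in $\Gamma$. Then $\mathcal U_{uv}$ is geodesically convex in $\Gamma$: for all $x,y\in\mathcal U_{uv}$, every shortest $xy$-path in $\Gamma$ consists entirely of nodes of $\mathcal U_{uv}$.
   Context: $G_\Delta=(V_\Delta,E_\Delta)$ is the infinite regular triangular grid graph. A triangular grid graph is the subgraph $\Gamma$ of $G_\Delta$ induced by a finite node set $V_\Gamma\subseteq V_\Delta$ such that $\Gamma$ is connected. The holes of $\Gamma$ are the connected components of the subgraph of $G_\Delta$ induced by $V_\Delta\setminus V_\Gamma$; exactly one is unbounded (the outer hole), the others are inner holes. $\Gamma$ is simple if it has no inner holes. Paths are sequences of nodes with consecutive nodes adjacent in $\Gamma$; the length of a path is its number of edges, and $d_\Gamma$ denotes the shortest-path distance in $\Gamma$. *)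

theory Defs
  imports Main
begin

text \<open>Nodes of the infinite regular triangular grid G_Delta in axial coordinates:
  node (a,b) is the point a*e1 + b*e2 with e1 = (1,0), e2 = (1/2, sqrt 3 / 2).\<close>
type_synonym node = "int \<times> int"

definition tri_adj :: "node \<Rightarrow> node \<Rightarrow> bool" where
  "tri_adj p q \<longleftrightarrow> (fst q - fst p, snd q - snd p) \<in> {(1,0), (-1,0), (0,1), (0,-1), (1,-1), (-1,1)}"

definition is_path_in :: "node set \<Rightarrow> node list \<Rightarrow> bool" where
  "is_path_in S ps \<longleftrightarrow> ps \<noteq> [] \<and> set ps \<subseteq> S \<and>
     (\<forall>i. Suc i < length ps \<longrightarrow> tri_adj (ps ! i) (ps ! Suc i))"

definition path_between :: "node set \<Rightarrow> node \<Rightarrow> node \<Rightarrow> node list \<Rightarrow> bool" where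
  "path_between S x y ps \<longleftrightarrow> is_path_in S ps \<and> hd ps = x \<and> last ps = y"

definition path_len :: "node list \<Rightarrow> nat" where
  "path_len ps = length ps - 1"

definition connected_in :: "node set \<Rightarrow> node \<Rightarrow> node \<Rightarrow> bool" where
  "connected_in S x y \<longleftrightarrow> (\<exists>ps. path_between S x y ps)"

definition tri_grid_graph :: "node set \<Rightarrow> bool" where
  "tri_grid_graph V \<longleftrightarrow> finite V \<and> (\<forall>x\<in>V. \<forall>y\<in>V. connected_in V x y)"

definition holes :: "node set \<Rightarrow> node set set" where
  "holes V = {{y. connected_in (- V) x y} | x. x \<notin> V}"

text \<open>Simple: no inner (bounded = finite) holes, i.e. every hole is the unbounded one.\<close>
definition simple_tri_grid_graph :: "node set \<Rightarrow> bool" where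
  "simple_tri_grid_graph V \<longleftrightarrow> tri_grid_graph V \<and> (\<forall>H\<in>holes V. infinite H)"

definition dist_in :: "node set \<Rightarrow> node \<Rightarrow> node \<Rightarrow> nat" where
  "dist_in V x y = (LEAST n. \<exists>ps. path_between V x y ps \<and> path_len ps = n)"

definition shortest_path :: "node set \<Rightarrow> node \<Rightarrow> node \<Rightarrow> node list \<Rightarrow> bool" where
  "shortest_path V x y ps \<longleftrightarrow> path_between V x y ps \<and> path_len ps = dist_in V x y"

definition U_set :: "node set \<Rightarrow> node \<Rightarrow> node \<Rightarrow> node set" where
  "U_set V u v = {w. \<exists>ps. shortest_path V u v ps \<and> w \<in> set ps}"

definition geodesically_convex :: "node set \<Rightarrow> node set \<Rightarrow> bool" where
  "geodesically_convex V U \<longleftrightarrow>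
     (\<forall>x\<in>U. \<forall>y\<in>U. \<forall>ps. shortest_path V x y ps \<longrightarrow> set ps \<subseteq> U)"

end

theory Submission
  imports Defs
begin

fun adjw :: "node list \<Rightarrow> bool" where
  "adjw (x # y # zs) = (tri_adj x y \<and> adjw (y # zs))"
| "adjw _ = True"

fun esum :: "(node \<Rightarrow> node \<Rightarrow> int) \<Rightarrow> node list \<Rightarrow> int" where
  "esum g (x # y # zs) = g x y + esum g (y # zs)"
| "esum g _ = 0"

lemma is_path_in_adjw: "is_path_in S ps \<longleftrightarrow> ps \<noteq> [] \<and> set ps \<subseteq> S \<and> adjw ps"
proof -
  have "(\<forall>i. Suc i < length ps \<longrightarrow> tri_adj (ps ! i) (ps ! Suc i)) \<longleftrightarrow> adjw ps" for ps
  proof (induction ps rule: adjw.induct)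
    case (1 x y zs)
    have "(\<forall>i. Suc i < length (x # y # zs) \<longrightarrow> tri_adj ((x # y # zs) ! i) ((x # y # zs) ! Suc i))
      \<longleftrightarrow> tri_adj x y \<and> (\<forall>i. Suc i < length (y # zs) \<longrightarrow> tri_adj ((y # zs) ! i) ((y # zs) ! Suc i))"
      (is "?L \<longleftrightarrow> ?R")
    proof
      assume ?L
      then have "tri_adj x y" by (metis length_Cons nth_Cons_0 nth_Cons_Suc zero_less_Suc Suc_less_eq)
      moreover have "\<forall>i. Suc i < length (y # zs) \<longrightarrow> tri_adj ((y # zs) ! i) ((y # zs) ! Suc i)"
      proof (intro allI impI)
        fix i assume "Suc i < length (y # zs)"
        then show "tri_adj ((y # zs) ! i) ((y # zs) ! Suc i)" using \<open>?L\<close>[rule_format, of "Suc i"] by simp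
      qed
      ultimately show ?R by blast
    next
      assume ?R
      show ?L
      proof (intro allI impI)
        fix i assume "Suc i < length (x # y # zs)"
        then show "tri_adj ((x # y # zs) ! i) ((x # y # zs) ! Suc i)"
          using \<open>?R\<close> by (cases i) auto
      qed
    qed
    then show ?case using 1 by simp
  qed auto
  then show ?thesis unfolding is_path_in_def by blast
qed

lemma adjw_Cons': "adjw (x # xs) \<longleftrightarrow> adjw xs \<and> (xs \<noteq> [] \<longrightarrow> tri_adj x (hd xs))"
  by (cases xs) auto
lemma esum_Cons': "esum g (x # xs) = esum g xs + (if xs \<noteq> [] then g x (hd xs) else 0)"
  by (cases xs) auto

lemma adjw_append:
  "adjw (xs @ ys) \<longleftrightarrow> adjw xs \<and> adjw ys \<and> (xs \<noteq> [] \<and> ys \<noteq> [] \<longrightarrow> tri_adj (last xs) (hd ys))"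
  by (induction xs rule: adjw.induct) (auto simp: adjw_Cons' esum_Cons')

lemma adjw_Cons: "adjw (x # xs) \<longleftrightarrow> adjw xs \<and> (xs \<noteq> [] \<longrightarrow> tri_adj x (hd xs))"
  by (cases xs) auto

lemma tri_adj_iff: "tri_adj p q \<longleftrightarrow>
  (fst q - fst p = 1 \<and> snd q = snd p) \<or> (fst q - fst p = -1 \<and> snd q = snd p) \<or>
  (fst q = fst p \<and> snd q - snd p = 1) \<or> (fst q = fst p \<and> snd q - snd p = -1) \<or>
  (fst q - fst p = 1 \<and> snd q - snd p = -1) \<or> (fst q - fst p = -1 \<and> snd q - snd p = 1)"
  unfolding tri_adj_def by (simp only: insert_iff empty_iff prod.inject) arith

lemma tri_adj_sym: "tri_adj x y \<Longrightarrow> tri_adj y x"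
  unfolding tri_adj_iff by (elim disjE conjE) simp_all

lemma tri_adj_disj:
  assumes "tri_adj (a,b) q"
  shows "q = (a+1,b) \<or> q = (a-1,b) \<or> q = (a,b+1) \<or> q = (a,b-1) \<or> q = (a+1,b-1) \<or> q = (a-1,b+1)"
proof -
  obtain c d where q: "q = (c,d)" by (cases q)
  show ?thesis
    using assms unfolding q tri_adj_iff fst_conv snd_conv prod.inject
    by (elim disjE conjE) (simp_all add: algebra_simps)
qed

lemma tri_adj_cases:
  assumes "tri_adj (a,b) q"
  obtains "q = (a+1,b)" | "q = (a-1,b)" | "q = (a,b+1)" | "q = (a,b-1)" | "q = (a+1,b-1)" | "q = (a-1,b+1)"
proof -
  obtain c d where q: "q = (c,d)" by (cases q)
  have "q = (a+1,b) \<or> q = (a-1,b) \<or> q = (a,b+1) \<or> q = (a,b-1) \<or> q = (a+1,b-1) \<or> q = (a-1,b+1)"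
    using assms unfolding q tri_adj_iff fst_conv snd_conv prod.inject
    by (elim disjE conjE) (simp_all add: algebra_simps)
  then show ?thesis using that by blast
qed

lemma adjw_rev: "adjw xs \<Longrightarrow> adjw (rev xs)"
proof (induction xs rule: adjw.induct)
  case (1 x y zs)
  have "rev (x # y # zs) = rev (y # zs) @ [x]" by simp
  moreover have "last (rev (y # zs)) = y" by simp
  moreover have "tri_adj y x" using 1 tri_adj_sym by simp
  ultimately show ?case using 1 by (simp add: adjw_append)
qed auto

lemma esum_append:
  "esum g (xs @ ys) = esum g xs + esum g ys + (if xs \<noteq> [] \<and> ys \<noteq> [] then g (last xs) (hd ys) else 0)"
  by (induction xs rule: adjw.induct) (auto simp: adjw_Cons' esum_Cons')

lemma esum_Cons: "esum g (x # xs) = esum g xs + (if xs \<noteq> [] then g x (hd xs) else 0)"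
  by (cases xs) auto

lemma esum_rev:
  assumes "\<And>x y. g y x = - g x y"
  shows "esum g (rev xs) = - esum g xs"
proof (induction xs rule: adjw.induct)
  case (1 x y zs)
  have "esum g (rev (x # y # zs)) = esum g (rev (y # zs) @ [x])" by simp
  also have "\<dots> = esum g (rev (y # zs)) + g y x" by (simp add: esum_append)
  finally show ?case using 1 assms[of y x] by simp
qed auto

lemma esum_map: "esum g (map f xs) = esum (\<lambda>x y. g (f x) (f y)) xs"
  by (induction xs rule: adjw.induct) auto

lemma esum_diff: "esum (\<lambda>x y. g x y - h x y) xs = esum g xs - esum h xs"
  by (induction xs rule: adjw.induct) auto

lemma esum_sum: "esum (\<lambda>x y. \<Sum>l\<in>L. g l x y) xs = (\<Sum>l\<in>L. esum (g l) xs)"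
  by (induction xs rule: adjw.induct) (auto simp: sum.distrib)

lemma esum_cong:
  assumes "adjw xs" "set xs \<subseteq> S" "\<And>x y. x \<in> S \<Longrightarrow> y \<in> S \<Longrightarrow> tri_adj x y \<Longrightarrow> g x y = h x y"
  shows "esum g xs = esum h xs"
  using assms by (induction xs rule: adjw.induct) auto

lemma esum_telescope:
  "xs \<noteq> [] \<Longrightarrow> esum (\<lambda>x y. f y - f x) xs = f (last xs) - f (hd xs)"
  by (induction xs rule: adjw.induct) auto

lemma esum_const: "esum (\<lambda>x y. c) xs = c * (int (length xs) - 1)" if "xs \<noteq> []"
  using that by (induction xs rule: adjw.induct) (auto simp: algebra_simps)

lemma esum_nonneg: "(\<And>x y. g x y \<ge> 0) \<Longrightarrow> esum g xs \<ge> 0"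
  by (induction xs rule: adjw.induct) auto

definition cr :: "int \<Rightarrow> int \<Rightarrow> node \<Rightarrow> node \<Rightarrow> int" where
  "cr b t x y = (if snd x = b \<and> snd y = b+1 \<and> fst x \<ge> t then 1 else 0)
              - (if snd y = b \<and> snd x = b+1 \<and> fst y \<ge> t then 1 else 0)"

definition Wsum :: "node list \<Rightarrow> int \<Rightarrow> int \<Rightarrow> int" where
  "Wsum g b t = esum (cr b t) g"

definition wind :: "node list \<Rightarrow> node \<Rightarrow> int" where
  "wind g p = Wsum g (snd p) (fst p + 1)"

definition closedw :: "node list \<Rightarrow> bool" where
  "closedw g \<longleftrightarrow> g \<noteq> [] \<and> adjw g \<and> hd g = last g"

lemma esum_zero_closed:
  assumes "closedw g" "\<And>x y. tri_adj x y \<Longrightarrow> x \<in> S \<Longrightarrow> y \<in> S \<Longrightarrow> h x y = f y - f x" "set g \<subseteq> S"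
  shows "esum h g = 0"
proof -
  have "esum h g = esum (\<lambda>x y. f y - f x) g"
    using assms(1,3) by (intro esum_cong[of _ S]) (auto simp: closedw_def assms(2))
  also have "\<dots> = 0" using assms(1) by (simp add: esum_telescope closedw_def)
  finally show ?thesis .
qed

lemma flux_edge:
  assumes "tri_adj x y" "x \<noteq> (qa, b+1)" "y \<noteq> (qa, b+1)"
  shows "cr b (qa+1) x y - cr (b+1) (qa+1) x y =
     (if snd y = b+1 \<and> fst y \<ge> qa+1 then 1 else 0) - (if snd x = b+1 \<and> fst x \<ge> qa+1 then 1 else 0)"
proof -
  obtain a c where x: "x = (a,c)" by (cases x)
  show ?thesis using assms(1) unfolding x
    by (rule tri_adj_cases) (use assms in \<open>auto simp: x cr_def\<close>)
qed

lemma flux: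
  assumes "closedw g" "(qa, b+1) \<notin> set g"
  shows "Wsum g (b+1) (qa+1) = Wsum g b (qa+1)"
proof -
  have "esum (\<lambda>x y. cr b (qa+1) x y - cr (b+1) (qa+1) x y) g = 0"
    by (rule esum_zero_closed[OF assms(1) flux_edge, of "- {(qa,b+1)}"]) (use assms in auto)
  then show ?thesis by (simp add: esum_diff Wsum_def)
qed

lemma shift_edge:
  assumes "tri_adj x y" "x \<noteq> (t, b)" "y \<noteq> (t, b)"
  shows "cr b t x y = cr b (t+1) x y"
  using assms unfolding cr_def by (auto simp: prod_eq_iff)

lemma shift:
  assumes "adjw g" "(t, b) \<notin> set g"
  shows "Wsum g b t = Wsum g b (t+1)"
  unfolding Wsum_def
  by (rule esum_cong[OF assms(1), of "- {(t,b)}"]) (use assms shift_edge in auto)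

lemma Wsum_left:
  assumes "closedw g" "\<forall>z\<in>set g. fst z \<ge> t"
  shows "Wsum g b t = 0"
  unfolding Wsum_def
proof (rule esum_zero_closed[OF assms(1), of "{z. fst z \<ge> t}" _ "\<lambda>z. if snd z \<le> b then 0 else 1"])
  fix x y assume "tri_adj x y" "x \<in> {z. fst z \<ge> t}" "y \<in> {z. fst z \<ge> t}"
  then show "cr b t x y = (if snd y \<le> b then 0 else 1) - (if snd x \<le> b then 0 else 1)"
    unfolding tri_adj_iff cr_def by (elim disjE conjE) auto
qed (use assms in auto)

lemma esum_zero_on: "(\<And>x y. x \<in> set g \<Longrightarrow> y \<in> set g \<Longrightarrow> h x y = 0) \<Longrightarrow> esum h g = 0"
  by (induction g rule: adjw.induct) auto

lemma Wsum_right: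
  assumes "\<forall>z\<in>set g. fst z < t"
  shows "Wsum g b t = 0"
  unfolding Wsum_def by (rule esum_zero_on) (use assms in \<open>auto simp: cr_def\<close>)

lemma Wsum_row:
  assumes "\<forall>z\<in>set g. snd z \<noteq> b"
  shows "Wsum g b t = 0"
  unfolding Wsum_def by (rule esum_zero_on) (use assms in \<open>auto simp: cr_def\<close>)

lemma wind_nonzero_box:
  assumes "closedw g" "wind g p \<noteq> 0"
  shows "p \<in> {Min (fst ` set g) .. Max (fst ` set g)} \<times> snd ` set g"
proof -
  obtain a b where p: "p = (a,b)" by (cases p)
  have fin: "finite (fst ` set g)" "fst ` set g \<noteq> {}" using assms(1) by (auto simp: closedw_def)
  have "\<exists>z\<in>set g. snd z = b" using Wsum_row[of g b] assms(2) by (auto simp: wind_def p)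
  then have B: "b \<in> snd ` set g" by force
  have "\<not> (\<forall>z\<in>set g. fst z \<ge> a + 1)" using Wsum_left[OF assms(1), of "a+1" b] assms(2)
    by (auto simp: wind_def p)
  then obtain z1 where z1: "z1 \<in> set g" "fst z1 \<le> a" by auto
  have "\<not> (\<forall>z\<in>set g. fst z < a + 1)" using Wsum_right[of g "a+1" b] assms(2)
    by (auto simp: wind_def p)
  then obtain z2 where z2: "z2 \<in> set g" "fst z2 \<ge> a" by auto
  have "Min (fst ` set g) \<le> fst z1" using fin z1 by simp
  moreover have "fst z2 \<le> Max (fst ` set g)" using fin z2 by simp
  ultimately have "Min (fst ` set g) \<le> a \<and> a \<le> Max (fst ` set g)" using z1 z2 by linarith
  then show ?thesis using B by (simp add: p)
qed

lemma wind_step: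
  assumes "closedw g" "tri_adj p q" "p \<notin> set g" "q \<notin> set g"
  shows "wind g q = wind g p"
proof -
  obtain a b where p: "p = (a,b)" by (cases p)
  have ad: "adjw g" using assms(1) by (simp add: closedw_def)
  have E: "wind g (a+1,b) = wind g (a,b)" if "(a+1,b) \<notin> set g" for a b
    using shift[OF ad that] by (simp add: wind_def)
  have N: "wind g (a,b+1) = wind g (a,b)" if "(a,b+1) \<notin> set g" for a b
    using flux[OF assms(1) that] by (simp add: wind_def)
  have NW: "wind g (a-1,b+1) = wind g (a,b)" if "(a-1,b+1) \<notin> set g" "(a,b) \<notin> set g" for a b
    using flux[OF assms(1) that(1)] shift[OF ad that(2)] by (simp add: wind_def)
  have "tri_adj (a,b) q" using assms(2) by (simp add: p)
  from tri_adj_disj[OF this] show ?thesis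
  proof (elim disjE)
    assume "q = (a+1,b)" then show ?thesis using E assms(4) by (simp add: p)
  next
    assume "q = (a-1,b)" then show ?thesis using E[of "a-1" b] assms(3) by (simp add: p)
  next
    assume "q = (a,b+1)" then show ?thesis using N assms(4) by (simp add: p)
  next
    assume "q = (a,b-1)" then show ?thesis using N[of a "b-1"] assms(3) by (simp add: p)
  next
    assume "q = (a+1,b-1)" then show ?thesis using NW[of "a+1" "b-1"] assms(3,4) by (simp add: p)
  next
    assume "q = (a-1,b+1)" then show ?thesis using NW[of a b] assms(3,4) by (simp add: p)
  qed
qed

lemma wind_walk:
  assumes "closedw g" "adjw ps" "ps \<noteq> []" "set ps \<inter> set g = {}"
  shows "wind g (last ps) = wind g (hd ps)"
  using assms(2-4)
proof (induction ps rule: adjw.induct)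
  case (1 x y zs)
  then have "wind g y = wind g x" using wind_step[OF assms(1), of x y] by auto
  then show ?case using 1 by simp
qed auto

lemma connected_in_adjw: "connected_in S x y \<longleftrightarrow> (\<exists>ps. ps \<noteq> [] \<and> set ps \<subseteq> S \<and> adjw ps \<and> hd ps = x \<and> last ps = y)"
  unfolding connected_in_def path_between_def is_path_in_adjw by blast

definition holes_inf :: "node set \<Rightarrow> bool" where
  "holes_inf W \<longleftrightarrow> (\<forall>H\<in>holes W. infinite H)"

lemma wind_zero:
  assumes "holes_inf W" "closedw g" "set g \<subseteq> W" "p \<notin> W"
  shows "wind g p = 0"
proof (rule ccontr)
  assume nz: "wind g p \<noteq> 0"
  let ?H = "{y. connected_in (- W) p y}"
  have "?H \<in> holes W" using assms(4) unfolding holes_def by blast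
  then have inf: "infinite ?H" using assms(1) by (simp add: holes_inf_def)
  have "?H \<subseteq> {Min (fst ` set g) .. Max (fst ` set g)} \<times> snd ` set g"
  proof
    fix y assume "y \<in> ?H"
    then obtain ps where ps: "ps \<noteq> []" "set ps \<subseteq> - W" "adjw ps" "hd ps = p" "last ps = y"
      unfolding connected_in_adjw by blast
    have "wind g y = wind g p" using wind_walk[OF assms(2) ps(3,1)] ps assms(3) by auto
    then show "y \<in> {Min (fst ` set g) .. Max (fst ` set g)} \<times> snd ` set g"
      using wind_nonzero_box[OF assms(2)] nz by simp
  qed
  moreover have "finite ({Min (fst ` set g) .. Max (fst ` set g)} \<times> snd ` set g)" by simp
  ultimately show False using inf finite_subset by blast
qed

definition is_lad :: "node set \<Rightarrow> int \<Rightarrow> int \<Rightarrow> int \<Rightarrow> int \<Rightarrow> int \<Rightarrow> bool" where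
  "is_lad W b aL aR cL cR \<longleftrightarrow> aL \<le> aR \<and> cL \<le> cR \<and>
     (\<forall>a. aL \<le> a \<and> a \<le> aR \<longrightarrow> (a,b) \<in> W) \<and> (aL-1,b) \<notin> W \<and> (aR+1,b) \<notin> W \<and>
     (\<forall>a. cL \<le> a \<and> a \<le> cR \<longrightarrow> (a,b+1) \<in> W) \<and> (cL-1,b+1) \<notin> W \<and> (cR+1,b+1) \<notin> W \<and>
     max aL cL \<le> min aR (cR+1)"

definition ladd :: "int \<Rightarrow> int \<Rightarrow> int \<Rightarrow> int \<Rightarrow> int \<Rightarrow> node \<Rightarrow> node \<Rightarrow> int" where
  "ladd b aL aR cL cR x y =
     (if snd x = b \<and> aL \<le> fst x \<and> fst x \<le> aR \<and> snd y = b+1 \<and> cL \<le> fst y \<and> fst y \<le> cR then 1 else 0)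
   - (if snd y = b \<and> aL \<le> fst y \<and> fst y \<le> aR \<and> snd x = b+1 \<and> cL \<le> fst x \<and> fst x \<le> cR then 1 else 0)"

lemma ladder_edge:
  assumes "is_lad W b aL aR cL cR" "x \<in> W" "y \<in> W" "tri_adj x y"
  shows "cr b (max aL cL) x y - cr b (min aR (cR+1) + 1) x y = ladd b aL aR cL cR x y"
proof -
  obtain a c where x: "x = (a,c)" by (cases x)
  have n1: "snd y = b+1 \<longrightarrow> fst y \<noteq> cL - 1 \<and> fst y \<noteq> cR + 1"
     "snd x = b+1 \<longrightarrow> fst x \<noteq> cL - 1 \<and> fst x \<noteq> cR + 1"
     "max aL cL \<le> min aR (cR+1)" "aL \<le> aR" "cL \<le> cR"
    using assms(1-3) unfolding is_lad_def by (metis prod.collapse)+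
  from tri_adj_disj[of a c y] assms(4) have "y = (a+1,c) \<or> y = (a-1,c) \<or> y = (a,c+1) \<or> y = (a,c-1) \<or> y = (a+1,c-1) \<or> y = (a-1,c+1)"
    by (simp add: x)
  then show ?thesis
  proof (elim disjE)
    assume "y = (a,c+1)" then show ?thesis using n1 by (auto simp: x cr_def ladd_def)
  next
    assume "y = (a,c-1)" then show ?thesis using n1 by (auto simp: x cr_def ladd_def)
  next
    assume "y = (a-1,c+1)" then show ?thesis using n1 by (auto simp: x cr_def ladd_def)
  next
    assume "y = (a+1,c-1)" then show ?thesis using n1 by (auto simp: x cr_def ladd_def)
  qed (auto simp: x cr_def ladd_def)
qed

lemma ladder_zero:
  assumes "holes_inf W" "closedw g" "set g \<subseteq> W" "is_lad W b aL aR cL cR"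
  shows "esum (ladd b aL aR cL cR) g = 0"
proof -
  note L = assms(4)[unfolded is_lad_def]
  have ad: "adjw g" using assms(2) by (simp add: closedw_def)
  have "esum (ladd b aL aR cL cR) g = esum (\<lambda>x y. cr b (max aL cL) x y - cr b (min aR (cR+1) + 1) x y) g"
    by (rule esum_cong[OF ad assms(3)]) (use ladder_edge[OF assms(4)] in auto)
  also have "\<dots> = Wsum g b (max aL cL) - Wsum g b (min aR (cR+1) + 1)"
    by (simp add: esum_diff Wsum_def)
  also have "Wsum g b (max aL cL) = 0"
  proof (cases "cL \<le> aL")
    case True
    have "wind g (aL-1,b) = 0" using wind_zero[OF assms(1-3)] L by auto
    then show ?thesis using True by (simp add: wind_def max_def)
  next
    case False
    have "wind g (cL-1,b+1) = 0" using wind_zero[OF assms(1-3)] L by auto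
    moreover have "(cL-1,b+1) \<notin> set g" using L assms(3) by auto
    ultimately show ?thesis using False flux[OF assms(2), of "cL-1" b] by (simp add: wind_def max_def)
  qed
  also have "Wsum g b (min aR (cR+1) + 1) = 0"
  proof (cases "aR \<le> cR + 1")
    case True
    have "wind g (aR+1,b) = 0" using wind_zero[OF assms(1-3)] L by auto
    moreover have "(aR+1,b) \<notin> set g" using L assms(3) by auto
    ultimately show ?thesis using True shift[OF ad, of "aR+1" b] by (simp add: wind_def min_def)
  next
    case False
    have "wind g (cR+1,b+1) = 0" using wind_zero[OF assms(1-3)] L by auto
    moreover have "(cR+1,b+1) \<notin> set g" using L assms(3) by auto
    ultimately show ?thesis using False flux[OF assms(2), of "cR+1" b] by (simp add: wind_def min_def)
  qed
  finally show ?thesis by simp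
qed

definition walk :: "node set \<Rightarrow> node list \<Rightarrow> bool" where
  "walk W ps \<longleftrightarrow> ps \<noteq> [] \<and> set ps \<subseteq> W \<and> adjw ps"

definition geod :: "node set \<Rightarrow> node list \<Rightarrow> bool" where
  "geod W ps \<longleftrightarrow> walk W ps \<and>
     (\<forall>qs. walk W qs \<and> hd qs = hd ps \<and> last qs = last ps \<longrightarrow> length ps \<le> length qs)"

lemma walk_append: "walk W (xs @ ys) \<longleftrightarrow> (xs = [] \<longrightarrow> walk W ys) \<and> (ys = [] \<longrightarrow> walk W xs) \<and>
   (xs \<noteq> [] \<and> ys \<noteq> [] \<longrightarrow> walk W xs \<and> walk W ys \<and> tri_adj (last xs) (hd ys))"
  unfolding walk_def by (auto simp: adjw_append)

lemma esum_join:
  assumes "xs \<noteq> []" "ys \<noteq> []" "hd ys = last xs"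
  shows "esum g (xs @ tl ys) = esum g xs + esum g ys"
proof -
  obtain y ys' where ys: "ys = y # ys'" using assms(2) by (cases ys) auto
  show ?thesis using assms unfolding ys by (simp add: esum_append esum_Cons')
qed

lemma walk_join:
  assumes "walk W xs" "walk W ys" "hd ys = last xs"
  shows "walk W (xs @ tl ys)"
proof -
  obtain y ys' where ys: "ys = y # ys'" using assms(2) by (cases ys) (auto simp: walk_def)
  show ?thesis using assms unfolding ys walk_def by (auto simp: adjw_append adjw_Cons')
qed

lemma join_hd_last:
  assumes "xs \<noteq> []" "ys \<noteq> []" "hd ys = last xs"
  shows "hd (xs @ tl ys) = hd xs" "last (xs @ tl ys) = last ys"
  using assms by (cases ys; auto)+

lemma geod_infix:
  assumes "geod W (xs @ ys @ zs)" "ys \<noteq> []"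
  shows "geod W ys"
proof -
  have w: "walk W (xs @ ys @ zs)" using assms(1) by (simp add: geod_def)
  have wy: "walk W ys" using w assms(2) by (simp add: walk_append) (metis walk_append)
  show ?thesis unfolding geod_def
  proof (intro conjI allI impI wy)
    fix qs assume qs: "walk W qs \<and> hd qs = hd ys \<and> last qs = last ys"
    have "walk W (xs @ qs @ zs)" using w qs assms(2) unfolding walk_append
      by (metis append_is_Nil_conv hd_append2 last_appendR walk_def)
    moreover have "hd (xs @ qs @ zs) = hd (xs @ ys @ zs)"
      using qs assms(2) by (cases xs) (auto simp: walk_def)
    moreover have "last (xs @ qs @ zs) = last (xs @ ys @ zs)"
      using qs assms(2) by (cases zs rule: rev_cases) (auto simp: walk_def)
    ultimately have "length (xs @ ys @ zs) \<le> length (xs @ qs @ zs)"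
      using assms(1) unfolding geod_def by blast
    then show "length ys \<le> length qs" by simp
  qed
qed

lemma adjw_fst_bound:
  "adjw ps \<Longrightarrow> ps \<noteq> [] \<Longrightarrow> \<bar>fst (last ps) - fst (hd ps)\<bar> \<le> int (length ps) - 1"
proof (induction ps rule: adjw.induct)
  case (1 x y zs)
  have "tri_adj x y" using 1(2) by simp
  then have "\<bar>fst y - fst x\<bar> \<le> 1" unfolding tri_adj_iff by (elim disjE conjE) simp_all
  then show ?case using 1 by simp
qed auto

lemma row_walk:
  assumes "\<And>k. min a1 a2 \<le> k \<Longrightarrow> k \<le> max a1 a2 \<Longrightarrow> (k,c) \<in> W"
  shows "\<exists>rs. walk W rs \<and> hd rs = (a1,c) \<and> last rs = (a2,c) \<and> int (length rs) = \<bar>a1 - a2\<bar> + 1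
     \<and> (\<forall>z\<in>set rs. snd z = c)"
proof -
  have up: "adjw (map (\<lambda>k. (k,c)) [i..j])" for i j
  proof (induction i j rule: upto.induct)
    case (1 i j)
    show ?case
    proof (cases "i < j")
      case True
      have e1: "[i..j] = i # [i+1..j]" by (rule upto_rec1) (use True in simp)
      have e2: "[i+1..j] = (i+1) # [i+1+1..j]" by (rule upto_rec1) (use True in simp)
      have "adjw (map (\<lambda>k. (k,c)) [i+1..j])" using 1 True by simp
      then show ?thesis unfolding e1 by (subst (asm) e2, subst e2) (simp add: tri_adj_iff)
    next
      case False
      then show ?thesis by (cases "i = j") auto
    qed
  qed
  show ?thesis
  proof (cases "a1 \<le> a2")
    case True
    let ?rs = "map (\<lambda>k. (k,c)) [a1..a2]"
    have "walk W ?rs" using up assms True by (auto simp: walk_def)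
    moreover have "hd ?rs = (a1,c)" using upto_rec1[OF True] by simp
    moreover have "last ?rs = (a2,c)" using upto_rec2[OF True] by simp
    ultimately show ?thesis using True by (intro exI[of _ ?rs]) auto
  next
    case False
    let ?rs = "rev (map (\<lambda>k. (k,c)) [a2..a1])"
    have F: "a2 \<le> a1" using False by simp
    have "walk W ?rs" using up assms False adjw_rev by (auto simp: walk_def)
    moreover have "hd ?rs = (a1,c)" using upto_rec2[OF F] by (simp add: hd_rev)
    moreover have "last ?rs = (a2,c)" using upto_rec1[OF F] by (simp add: last_rev)
    ultimately show ?thesis using False by (intro exI[of _ ?rs]) auto
  qed
qed

lemma first_nz:
  assumes "esum (\<lambda>x y. \<bar>g x y\<bar>) ps \<ge> 1"
  shows "\<exists>seg s post. ps = seg @ s # post \<and> seg \<noteq> [] \<and> g (last seg) s \<noteq> 0 \<and> esum (\<lambda>x y. \<bar>g x y\<bar>) seg = 0"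
  using assms
proof (induction ps rule: adjw.induct)
  case (1 x y zs)
  show ?case
  proof (cases "g x y = 0")
    case False
    then show ?thesis by (intro exI[of _ "[x]"] exI[of _ y] exI[of _ zs]) auto
  next
    case True
    then have "esum (\<lambda>x y. \<bar>g x y\<bar>) (y # zs) \<ge> 1" using 1(2) by simp
    then obtain seg s post where sp: "y # zs = seg @ s # post" "seg \<noteq> []" "g (last seg) s \<noteq> 0"
      "esum (\<lambda>x y. \<bar>g x y\<bar>) seg = 0" using 1(1) by blast
    have "hd seg = y" using sp(1,2) by (cases seg) auto
    then have "esum (\<lambda>x y. \<bar>g x y\<bar>) (x # seg) = 0" using sp(2,4) True by (simp add: esum_Cons')
    then show ?thesis using sp by (intro exI[of _ "x # seg"] exI[of _ s] exI[of _ post]) auto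
  qed
qed auto

lemma two_nz:
  assumes "esum (\<lambda>x y. \<bar>g x y\<bar>) ps \<ge> 2" "\<And>x y. \<bar>g x y\<bar> \<le> 1"
  shows "\<exists>pre p seg s post. ps = pre @ p # seg @ s # post \<and> seg \<noteq> [] \<and> g p (hd seg) \<noteq> 0
      \<and> g (last seg) s \<noteq> 0 \<and> esum (\<lambda>x y. \<bar>g x y\<bar>) seg = 0"
  using assms(1)
proof (induction ps rule: adjw.induct)
  case (1 x y zs)
  show ?case
  proof (cases "g x y = 0")
    case False
    have "\<bar>g x y\<bar> \<le> 1" by (rule assms(2))
    then have "esum (\<lambda>x y. \<bar>g x y\<bar>) (y # zs) \<ge> 1" using 1(2) by simp
    then obtain seg s post where sp: "y # zs = seg @ s # post" "seg \<noteq> []" "g (last seg) s \<noteq> 0"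
      "esum (\<lambda>x y. \<bar>g x y\<bar>) seg = 0" using first_nz by blast
    have "hd seg = y" using sp(1,2) by (cases seg) auto
    then show ?thesis using sp False
      by (intro exI[of _ "[]"] exI[of _ x] exI[of _ seg] exI[of _ s] exI[of _ post]) auto
  next
    case True
    then have "esum (\<lambda>x y. \<bar>g x y\<bar>) (y # zs) \<ge> 2" using 1(2) by simp
    then obtain pre p seg s post where sp: "y # zs = pre @ p # seg @ s # post" "seg \<noteq> []" "g p (hd seg) \<noteq> 0"
      "g (last seg) s \<noteq> 0" "esum (\<lambda>x y. \<bar>g x y\<bar>) seg = 0" using 1(1) by blast
    then show ?thesis
      by (intro exI[of _ "x # pre"] exI[of _ p] exI[of _ seg] exI[of _ s] exI[of _ post]) auto
  qed
qed auto

lemma esum_abs_zero: "esum (\<lambda>x y. \<bar>g x y\<bar>) ps = 0 \<Longrightarrow> esum g ps = 0"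
proof (induction ps rule: adjw.induct)
  case (1 x y zs)
  have "esum (\<lambda>x y. \<bar>g x y\<bar>) (y # zs) \<ge> 0" by (rule esum_nonneg) simp
  then show ?case using 1 by simp
qed auto

lemma ladd_bound: "\<bar>ladd b aL aR cL cR x y\<bar> \<le> 1"
  unfolding ladd_def by auto

lemma ladd_same_row: "snd x = snd y \<Longrightarrow> ladd b aL aR cL cR x y = 0"
  unfolding ladd_def by auto

lemma esum_row_zero: "\<forall>z\<in>set rs. snd z = c \<Longrightarrow> esum (ladd b aL aR cL cR) rs = 0"
  by (rule esum_zero_on, rule ladd_same_row) auto

lemma adj_up: "tri_adj x y \<Longrightarrow> snd y = snd x + 1 \<Longrightarrow> fst x - 1 \<le> fst y \<and> fst y \<le> fst x"
  unfolding tri_adj_iff by (elim disjE conjE) simp_all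

lemma adj_down: "tri_adj x y \<Longrightarrow> snd y = snd x - 1 \<Longrightarrow> fst x \<le> fst y \<and> fst y \<le> fst x + 1"
  unfolding tri_adj_iff by (elim disjE conjE) simp_all

lemma no_double_use:
  assumes "holes_inf W" "geod W ps" "is_lad W b aL aR cL cR"
  shows "esum (\<lambda>x y. \<bar>ladd b aL aR cL cR x y\<bar>) ps \<le> 1"
proof (rule ccontr)
  let ?L = "ladd b aL aR cL cR"
  note L = assms(3)[unfolded is_lad_def]
  assume "\<not> ?thesis"
  then obtain pre p seg s post where sp: "ps = pre @ p # seg @ s # post" "seg \<noteq> []" "?L p (hd seg) \<noteq> 0"
      "?L (last seg) s \<noteq> 0" "esum (\<lambda>x y. \<bar>?L x y\<bar>) seg = 0"
    using two_nz[of ?L ps, OF _ ladd_bound] by fastforce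
  define q where "q = hd seg"
  define r where "r = last seg"
  have G: "geod W (p # seg @ [s])" using geod_infix[of W pre "p # seg @ [s]" post] assms(2) sp(1) by simp
  then have wG: "walk W (p # seg @ [s])" by (simp add: geod_def)
  then have wseg: "walk W seg" "tri_adj p q" "tri_adj r s" "p \<in> W" "s \<in> W"
    using sp(2) by (auto simp: walk_def adjw_append adjw_Cons' q_def r_def)
  have pq: "(snd p = b \<and> aL \<le> fst p \<and> fst p \<le> aR \<and> snd q = b+1 \<and> cL \<le> fst q \<and> fst q \<le> cR) \<or>
            (snd q = b \<and> aL \<le> fst q \<and> fst q \<le> aR \<and> snd p = b+1 \<and> cL \<le> fst p \<and> fst p \<le> cR)"
    using sp(3) unfolding q_def[symmetric] ladd_def by (auto split: if_splits)
  have rs: "(snd r = b \<and> aL \<le> fst r \<and> fst r \<le> aR \<and> snd s = b+1 \<and> cL \<le> fst s \<and> fst s \<le> cR) \<or>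
            (snd s = b \<and> aL \<le> fst s \<and> fst s \<le> aR \<and> snd r = b+1 \<and> cL \<le> fst r \<and> fst r \<le> cR)"
    using sp(4) unfolding r_def[symmetric] ladd_def by (auto split: if_splits)
  show False
  proof (cases "snd p = snd s")
    case True
    \<comment> \<open>shortcut along the row of p and s\<close>
    have "\<exists>rw. walk W rw \<and> hd rw = (fst p, snd p) \<and> last rw = (fst s, snd p) \<and>
        int (length rw) = \<bar>fst p - fst s\<bar> + 1 \<and> (\<forall>z\<in>set rw. snd z = snd p)"
    proof (rule row_walk)
      fix k assume "min (fst p) (fst s) \<le> k" "k \<le> max (fst p) (fst s)"
      then have "(snd p = b \<and> aL \<le> k \<and> k \<le> aR) \<or> (snd p = b+1 \<and> cL \<le> k \<and> k \<le> cR)"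
        using pq rs True by (auto simp: min_def max_def split: if_splits)
      then show "(k, snd p) \<in> W" using L by auto
    qed
    then obtain rw where rw: "walk W rw" "hd rw = p" "last rw = s" "int (length rw) = \<bar>fst p - fst s\<bar> + 1"
      using True by (metis prod.collapse)
    have "length (p # seg @ [s]) \<le> length rw" using G rw unfolding geod_def by simp
    then have l1: "int (length seg) + 2 \<le> \<bar>fst p - fst s\<bar> + 1" using rw(4) by simp
    have "\<bar>fst r - fst q\<bar> \<le> int (length seg) - 1"
      using adjw_fst_bound[of seg] wseg(1) sp(2) by (simp add: walk_def q_def r_def)
    moreover have "\<bar>(fst q - fst p) - (fst r - fst s)\<bar> \<le> 1"
    proof (cases "snd p = b")
      case True
      then have "snd q = snd p + 1" "snd r = snd s + 1" using pq rs \<open>snd p = snd s\<close> by auto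
      then show ?thesis using adj_up[OF wseg(2)] adj_up[OF tri_adj_sym[OF wseg(3)]] by auto
    next
      case False
      then have "snd q = snd p - 1" "snd r = snd s - 1" using pq rs \<open>snd p = snd s\<close> by auto
      then show ?thesis using adj_down[OF wseg(2)] adj_down[OF tri_adj_sym[OF wseg(3)]] by auto
    qed
    ultimately show False using l1 by linarith
  next
    case False
    have prow: "snd p = snd r" using pq rs False by auto
    have "\<exists>rw. walk W rw \<and> hd rw = (fst r, snd p) \<and> last rw = (fst p, snd p) \<and>
        int (length rw) = \<bar>fst r - fst p\<bar> + 1 \<and> (\<forall>z\<in>set rw. snd z = snd p)"
    proof (rule row_walk)
      fix k assume "min (fst r) (fst p) \<le> k" "k \<le> max (fst r) (fst p)"
      then have "(snd p = b \<and> aL \<le> k \<and> k \<le> aR) \<or> (snd p = b+1 \<and> cL \<le> k \<and> k \<le> cR)"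
        using pq rs False by (auto simp: min_def max_def split: if_splits)
      then show "(k, snd p) \<in> W" using L by auto
    qed
    then obtain rw where rw: "walk W rw" "hd rw = r" "last rw = p" "\<forall>z\<in>set rw. snd z = snd p"
      using prow by (metis prod.collapse)
    let ?C = "seg @ tl (rw @ [q])"
    have "walk W (rw @ [q])" using wseg rw sp(2) by (auto simp: walk_def adjw_append q_def)
    then have wC: "walk W ?C" using wseg rw sp(2) by (intro walk_join) (auto simp: r_def walk_def)
    have "hd ?C = q" "last ?C = q" using join_hd_last[of seg "rw @ [q]"] sp(2) rw
      by (auto simp: r_def q_def walk_def)
    then have cC: "closedw ?C" using wC by (auto simp: closedw_def walk_def)
    have "esum ?L ?C = 0" using ladder_zero[OF assms(1) cC _ assms(3)] wC by (simp add: walk_def)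
    moreover have "esum ?L ?C = ?L p q"
    proof -
      have "esum ?L seg = 0" using esum_abs_zero sp(5) by blast
      moreover have "esum ?L rw = 0" using esum_row_zero rw(4) by blast
      moreover have "esum ?L ?C = esum ?L seg + esum ?L (rw @ [q])"
        by (rule esum_join) (use rw sp(2) in \<open>auto simp: r_def walk_def\<close>)
      moreover have "esum ?L (rw @ [q]) = esum ?L rw + ?L p q"
        using rw by (simp add: esum_append walk_def)
      ultimately show ?thesis by simp
    qed
    ultimately show False using sp(3) q_def by simp
  qed
qed

lemma seg_left:
  fixes W :: "node set"
  assumes "finite W" "(a,b) \<in> W"
  shows "\<exists>aL\<le>a. (\<forall>k. aL \<le> k \<and> k \<le> a \<longrightarrow> (k,b) \<in> W) \<and> (aL-1,b) \<notin> W"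
proof (rule ccontr)
  assume H: "\<not> ?thesis"
  have all: "\<forall>k. a - int n \<le> k \<and> k \<le> a \<longrightarrow> (k,b) \<in> W" for n
  proof (induction n)
    case 0 then show ?case using assms(2) by auto
  next
    case (Suc n)
    have "a - int n \<le> a" by simp
    then have "(a - int n - 1, b) \<in> W" using H Suc by blast
    show ?case
    proof (intro allI impI)
      fix k assume k: "a - int (Suc n) \<le> k \<and> k \<le> a"
      show "(k,b) \<in> W"
      proof (cases "k = a - int n - 1")
        case True then show ?thesis using \<open>(a - int n - 1, b) \<in> W\<close> by simp
      next
        case False then show ?thesis using Suc k by auto
      qed
    qed
  qed
  have "range (\<lambda>n::nat. (a - int n, b)) \<subseteq> W"
  proof
    fix z assume "z \<in> range (\<lambda>n::nat. (a - int n, b))"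
    then obtain n where "z = (a - int n, b)" by blast
    then show "z \<in> W" using all[of n] by simp
  qed
  moreover have "inj (\<lambda>n::nat. (a - int n, b))" by (auto simp: inj_def)
  ultimately show False using assms(1) by (meson finite_subset infinite_UNIV_nat finite_imageD)
qed

lemma seg_right:
  fixes W :: "node set"
  assumes "finite W" "(a,b) \<in> W"
  shows "\<exists>aR\<ge>a. (\<forall>k. a \<le> k \<and> k \<le> aR \<longrightarrow> (k,b) \<in> W) \<and> (aR+1,b) \<notin> W"
proof (rule ccontr)
  assume H: "\<not> ?thesis"
  have all: "\<forall>k. a \<le> k \<and> k \<le> a + int n \<longrightarrow> (k,b) \<in> W" for n
  proof (induction n)
    case 0 then show ?case using assms(2) by auto
  next
    case (Suc n)
    have "a + int n \<ge> a" by simp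
    then have "(a + int n + 1, b) \<in> W" using H Suc by blast
    show ?case
    proof (intro allI impI)
      fix k assume k: "a \<le> k \<and> k \<le> a + int (Suc n)"
      show "(k,b) \<in> W"
      proof (cases "k = a + int n + 1")
        case True then show ?thesis using \<open>(a + int n + 1, b) \<in> W\<close> by simp
      next
        case False then show ?thesis using Suc k by auto
      qed
    qed
  qed
  have "range (\<lambda>n::nat. (a + int n, b)) \<subseteq> W"
  proof
    fix z assume "z \<in> range (\<lambda>n::nat. (a + int n, b))"
    then obtain n where "z = (a + int n, b)" by blast
    then show "z \<in> W" using all[of n] by simp
  qed
  moreover have "inj (\<lambda>n::nat. (a + int n, b))" by (auto simp: inj_def)
  ultimately show False using assms(1) by (meson finite_subset infinite_UNIV_nat finite_imageD)
qed

lemma seg_exists: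
  fixes W :: "node set"
  assumes "finite W" "(a,b) \<in> W"
  shows "\<exists>aL aR. aL \<le> a \<and> a \<le> aR \<and> (\<forall>k. aL \<le> k \<and> k \<le> aR \<longrightarrow> (k,b) \<in> W) \<and> (aL-1,b) \<notin> W \<and> (aR+1,b) \<notin> W"
proof -
  obtain aL where l: "aL \<le> a" "\<forall>k. aL \<le> k \<and> k \<le> a \<longrightarrow> (k,b) \<in> W" "(aL-1,b) \<notin> W"
    using seg_left[OF assms] by blast
  obtain aR where r: "a \<le> aR" "\<forall>k. a \<le> k \<and> k \<le> aR \<longrightarrow> (k,b) \<in> W" "(aR+1,b) \<notin> W"
    using seg_right[OF assms] by blast
  have "\<forall>k. aL \<le> k \<and> k \<le> aR \<longrightarrow> (k,b) \<in> W"
  proof (intro allI impI)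
    fix k assume "aL \<le> k \<and> k \<le> aR"
    then show "(k,b) \<in> W" using l(2) r(2) by (cases "k \<le> a") auto
  qed
  then show ?thesis using l r by blast
qed

lemma seg_unique:
  fixes W :: "node set"
  assumes "\<forall>k. aL \<le> k \<and> k \<le> aR \<longrightarrow> (k,b) \<in> W" "(aL-1,b) \<notin> W" "(aR+1,b) \<notin> W"
    "\<forall>k. aL' \<le> k \<and> k \<le> aR' \<longrightarrow> (k,b) \<in> W" "(aL'-1,b) \<notin> W" "(aR'+1,b) \<notin> W"
    "aL \<le> a" "a \<le> aR" "aL' \<le> a" "a \<le> aR'"
  shows "aL = aL' \<and> aR = aR'"
proof -
  have "\<not> aL < aL'"
  proof
    assume "aL < aL'" then have "aL \<le> aL'-1 \<and> aL'-1 \<le> aR" using assms(7-10) by linarith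
    then have "(aL'-1, b) \<in> W" using assms(1) by blast
    with assms(5) show False by simp
  qed
  moreover have "\<not> aL' < aL"
  proof
    assume "aL' < aL" then have "aL' \<le> aL-1 \<and> aL-1 \<le> aR'" using assms(7-10) by linarith
    then have "(aL-1, b) \<in> W" using assms(4) by blast
    with assms(2) show False by simp
  qed
  moreover have "\<not> aR < aR'"
  proof
    assume "aR < aR'" then have "aL' \<le> aR+1 \<and> aR+1 \<le> aR'" using assms(7-10) by linarith
    then have "(aR+1, b) \<in> W" using assms(4) by blast
    with assms(3) show False by simp
  qed
  moreover have "\<not> aR' < aR"
  proof
    assume "aR' < aR" then have "aL \<le> aR'+1 \<and> aR'+1 \<le> aR" using assms(7-10) by linarith
    then have "(aR'+1, b) \<in> W" using assms(1) by blast
    with assms(6) show False by simp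
  qed
  ultimately show ?thesis by simp
qed

definition LadS :: "node set \<Rightarrow> (int \<times> int \<times> int \<times> int \<times> int) set" where
  "LadS W = {(b,aL,aR,cL,cR). is_lad W b aL aR cL cR}"

definition ladt :: "int \<times> int \<times> int \<times> int \<times> int \<Rightarrow> node \<Rightarrow> node \<Rightarrow> int" where
  "ladt l x y = (case l of (b,aL,aR,cL,cR) \<Rightarrow> ladd b aL aR cL cR x y)"

lemma finite_LadS:
  assumes "finite W"
  shows "finite (LadS W)"
proof -
  have "LadS W \<subseteq> snd ` W \<times> fst ` W \<times> fst ` W \<times> fst ` W \<times> fst ` W"
  proof
    fix l assume "l \<in> LadS W"
    then obtain b aL aR cL cR where l: "l = (b,aL,aR,cL,cR)" "is_lad W b aL aR cL cR"
      unfolding LadS_def by blast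
    then have m: "(aL,b) \<in> W" "(aR,b) \<in> W" "(cL,b+1) \<in> W" "(cR,b+1) \<in> W"
      unfolding is_lad_def by auto
    then have "b \<in> snd ` W" "aL \<in> fst ` W" "aR \<in> fst ` W" "cL \<in> fst ` W" "cR \<in> fst ` W"
      by (metis fst_conv snd_conv imageI)+
    then show "l \<in> snd ` W \<times> fst ` W \<times> fst ` W \<times> fst ` W \<times> fst ` W" using l by simp
  qed
  moreover have "finite (snd ` W \<times> fst ` W \<times> fst ` W \<times> fst ` W \<times> fst ` W)" using assms by simp
  ultimately show ?thesis by (rule finite_subset)
qed

lemma edge_count_up:
  assumes "finite W" "x \<in> W" "y \<in> W" "tri_adj x y" "snd y = snd x + 1"
  shows "(\<Sum>l\<in>LadS W. \<bar>ladt l x y\<bar>) = 1"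
proof -
  obtain a b where x: "x = (a,b)" by (cases x)
  obtain c where y: "y = (c,b+1)" using assms(5) x by (cases y) auto
  obtain aL aR where sx: "aL \<le> a" "a \<le> aR" "\<forall>k. aL \<le> k \<and> k \<le> aR \<longrightarrow> (k,b) \<in> W" "(aL-1,b) \<notin> W" "(aR+1,b) \<notin> W"
    using seg_exists[OF assms(1), of a b] assms(2) x by blast
  obtain cL cR where sy: "cL \<le> c" "c \<le> cR" "\<forall>k. cL \<le> k \<and> k \<le> cR \<longrightarrow> (k,b+1) \<in> W" "(cL-1,b+1) \<notin> W" "(cR+1,b+1) \<notin> W"
    using seg_exists[OF assms(1), of c "b+1"] assms(3) y by blast
  have ca: "a - 1 \<le> c" "c \<le> a" using adj_up[OF assms(4,5)] x y by auto
  define l0 where "l0 = (b,aL,aR,cL,cR)"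
  have l0: "l0 \<in> LadS W" unfolding l0_def LadS_def is_lad_def using sx sy ca by auto
  have v0: "\<bar>ladt l0 x y\<bar> = 1" using sx sy by (simp add: l0_def ladt_def ladd_def x y)
  have rest: "ladt l x y = 0" if "l \<in> LadS W - {l0}" for l
  proof (rule ccontr)
    assume nz: "ladt l x y \<noteq> 0"
    obtain b' aL' aR' cL' cR' where l: "l = (b',aL',aR',cL',cR')" by (cases l) auto
    have L: "is_lad W b' aL' aR' cL' cR'" using that l unfolding LadS_def by auto
    have h: "b' = b" "aL' \<le> a" "a \<le> aR'" "cL' \<le> c" "c \<le> cR'"
      using nz by (auto simp: l ladt_def ladd_def x y split: if_splits)
    have L2: "is_lad W b aL' aR' cL' cR'" using L h(1) by simp
    note L3 = L2[unfolded is_lad_def]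
    have "aL = aL' \<and> aR = aR'"
      by (rule seg_unique[OF sx(3,4,5), of aL' aR' a]) (use L3 h sx in blast)+
    moreover have "cL = cL' \<and> cR = cR'"
      by (rule seg_unique[OF sy(3,4,5), of cL' cR' c]) (use L3 h sy in blast)+
    ultimately have "l = l0" using h by (simp add: l l0_def)
    then show False using that by simp
  qed
  have "(\<Sum>l\<in>LadS W. \<bar>ladt l x y\<bar>) = \<bar>ladt l0 x y\<bar> + (\<Sum>l\<in>LadS W - {l0}. \<bar>ladt l x y\<bar>)"
    using l0 finite_LadS[OF assms(1)] by (simp add: sum.remove)
  also have "(\<Sum>l\<in>LadS W - {l0}. \<bar>ladt l x y\<bar>) = 0" using rest by simp
  finally show ?thesis using v0 by simp
qed

lemma ladt_antisym: "ladt l y x = - ladt l x y"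
  unfolding ladt_def ladd_def by (cases l) simp

lemma edge_count:
  assumes "finite W" "x \<in> W" "y \<in> W" "tri_adj x y"
  shows "(\<Sum>l\<in>LadS W. \<bar>ladt l x y\<bar>) = (if snd x = snd y then 0 else 1)"
proof -
  have "snd y = snd x + 1 \<or> snd x = snd y + 1 \<or> snd x = snd y"
    using assms(4) unfolding tri_adj_iff by (elim disjE conjE) simp_all
  then show ?thesis
  proof (elim disjE)
    assume "snd y = snd x + 1" then show ?thesis using edge_count_up[OF assms] by simp
  next
    assume h: "snd x = snd y + 1"
    have "(\<Sum>l\<in>LadS W. \<bar>ladt l x y\<bar>) = (\<Sum>l\<in>LadS W. \<bar>ladt l y x\<bar>)"
      by (rule sum.cong) (simp_all only: ladt_antisym[of _ y x] abs_minus_cancel)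
    also have "\<dots> = 1" using edge_count_up[OF assms(1,3,2) tri_adj_sym[OF assms(4)] h] by simp
    finally show ?thesis using h by simp
  next
    assume h: "snd x = snd y"
    then have "ladt l x y = 0" for l by (cases l) (simp add: ladt_def ladd_same_row)
    then show ?thesis using h by simp
  qed
qed

definition rot :: "node \<Rightarrow> node" where
  "rot p = (- snd p, fst p + snd p)"

definition good :: "(node \<Rightarrow> node) \<Rightarrow> bool" where
  "good f \<longleftrightarrow> bij f \<and> (\<forall>x y. tri_adj (f x) (f y) = tri_adj x y)"

lemma good_rot: "good rot"
proof -
  have "rot (fst p + snd p, - fst p) = p" for p by (simp add: rot_def)
  then have s: "surj rot" by (rule surjI)
  have i: "inj rot" by (auto simp: inj_def rot_def prod_eq_iff)
  have "tri_adj (rot x) (rot y) = tri_adj x y" for x y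
  proof
    assume "tri_adj (rot x) (rot y)"
    then show "tri_adj x y" unfolding tri_adj_iff rot_def fst_conv snd_conv
      by (elim disjE conjE) (simp_all add: algebra_simps)
  next
    assume "tri_adj x y"
    then show "tri_adj (rot x) (rot y)" unfolding tri_adj_iff rot_def fst_conv snd_conv
      by (elim disjE conjE) (simp_all add: algebra_simps)
  qed
  then show ?thesis using s i by (simp add: good_def bij_def)
qed

lemma good_comp: "good f \<Longrightarrow> good g \<Longrightarrow> good (f \<circ> g)"
  unfolding good_def by (metis bij_comp comp_apply)

lemma good_id: "good id"
  unfolding good_def by simp

lemma good_pow: "good (rot ^^ d)"
proof (induction d)
  case 0
  have "rot ^^ 0 = id" by simp
  then show ?case using good_id by metis
next
  case (Suc d)
  have "rot ^^ Suc d = rot \<circ> rot ^^ d" by simp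
  then show ?case using good_comp[OF good_rot Suc] by metis
qed

lemma good_adjw: "good f \<Longrightarrow> adjw (map f ps) = adjw ps"
  by (induction ps rule: adjw.induct) (auto simp: good_def)

lemma good_walk: "good f \<Longrightarrow> walk (f ` V) (map f ps) = walk V ps"
proof -
  assume g: "good f"
  then have "inj f" by (simp add: good_def bij_def)
  then have "set (map f ps) \<subseteq> f ` V \<longleftrightarrow> set ps \<subseteq> V" by (simp add: inj_image_subset_iff)
  then show ?thesis using good_adjw[OF g] by (simp add: walk_def)
qed

lemma good_geod:
  assumes g: "good f" and G: "geod V ps"
  shows "geod (f ` V) (map f ps)"
proof -
  have bij: "bij f" and adj: "\<And>x y. tri_adj (f x) (f y) = tri_adj x y" using g by (auto simp: good_def)
  have w: "walk V ps" using G by (simp add: geod_def)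
  have "length ps \<le> length qs" if qs: "walk (f ` V) qs" "hd qs = hd (map f ps)" "last qs = last (map f ps)" for qs
  proof -
    let ?qs = "map (inv f) qs"
    have fi: "f (inv f z) = z" for z using bij by (simp add: bij_is_surj surj_f_inv_f)
    have if_: "inv f (f z) = z" for z using bij by (simp add: bij_is_inj)
    have e: "map f ?qs = qs" by (simp add: fi map_idI)
    have wq: "walk V ?qs" using good_walk[OF g, of V ?qs] qs(1) unfolding e by blast
    have ne: "qs \<noteq> []" "ps \<noteq> []" using qs(1) w by (auto simp: walk_def)
    have "hd ?qs = hd ps" using qs(2) ne by (simp add: hd_map if_)
    moreover have "last ?qs = last ps" using qs(3) ne by (simp add: last_map if_)
    ultimately have "length ps \<le> length ?qs" using G wq unfolding geod_def by blast
    then show ?thesis by simp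
  qed
  moreover have "walk (f ` V) (map f ps)" using good_walk[OF g] w by simp
  ultimately show ?thesis unfolding geod_def by auto
qed

lemma good_holes:
  assumes g: "good f" and H: "holes_inf V"
  shows "holes_inf (f ` V)"
  unfolding holes_inf_def
proof
  fix H' assume "H' \<in> holes (f ` V)"
  then obtain x' where x': "x' \<notin> f ` V" "H' = {y. connected_in (- (f ` V)) x' y}"
    unfolding holes_def by blast
  have bij: "bij f" using g by (simp add: good_def)
  have fi: "f (inv f z) = z" for z using bij by (simp add: bij_is_surj surj_f_inv_f)
  have inj: "inj f" using bij by (simp add: bij_is_inj)
  let ?x = "inv f x'"
  have xV: "?x \<notin> V" using x'(1) fi by (metis imageI)
  let ?H = "{y. connected_in (- V) ?x y}"
  have "?H \<in> holes V" using xV unfolding holes_def by blast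
  then have inf: "infinite ?H" using H by (simp add: holes_inf_def)
  have sub: "f ` ?H \<subseteq> H'"
  proof
    fix z assume "z \<in> f ` ?H"
    then obtain y where y: "z = f y" "connected_in (- V) ?x y" by blast
    then obtain ps where ps: "ps \<noteq> []" "set ps \<subseteq> - V" "adjw ps" "hd ps = ?x" "last ps = y"
      unfolding connected_in_adjw by blast
    have "f z \<notin> f ` V" if "z \<in> set ps" for z using that ps(2) inj_image_mem_iff[OF inj] by blast
    then have "set (map f ps) \<subseteq> - (f ` V)"
    proof -
      assume h: "\<And>z. z \<in> set ps \<Longrightarrow> f z \<notin> f ` V"
      show ?thesis
      proof
        fix z assume "z \<in> set (map f ps)"
        then obtain w where "w \<in> set ps" "z = f w" by auto
        then show "z \<in> - (f ` V)" using h[OF \<open>w \<in> set ps\<close>] by simp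
      qed
    qed
    moreover have "adjw (map f ps)" using good_adjw[OF g] ps(3) by simp
    moreover have "hd (map f ps) = x'" "last (map f ps) = z" using ps fi y by (auto simp: hd_map last_map)
    moreover have "map f ps \<noteq> []" using ps(1) by simp
    ultimately have "connected_in (- (f ` V)) x' z" unfolding connected_in_adjw by blast
    then show "z \<in> H'" using x'(2) by simp
  qed
  have "inj_on f ?H" by (rule inj_on_subset[OF inj]) simp
  then have "infinite (f ` ?H)" using inf by (simp add: finite_image_iff)
  then show "infinite H'" using sub by (meson rev_finite_subset)
qed

definition Rd :: "nat \<Rightarrow> node \<Rightarrow> node" where "Rd d = rot ^^ d"

definition LCg :: "nat \<Rightarrow> int \<times> int \<times> int \<times> int \<times> int \<Rightarrow> node \<Rightarrow> node \<Rightarrow> int" where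
  "LCg d l x y = ladt l (Rd d x) (Rd d y)"

definition KS :: "node set \<Rightarrow> (nat \<times> (int \<times> int \<times> int \<times> int \<times> int)) set" where
  "KS V = Sigma {..<3} (\<lambda>d. LadS (Rd d ` V))"

lemma good_Rd: "good (Rd d)" by (simp add: Rd_def good_pow)

lemma LCg_antisym: "LCg d l y x = - LCg d l x y"
  unfolding LCg_def by (rule ladt_antisym)

lemma LCg_bound: "\<bar>LCg d l x y\<bar> \<le> 1"
  unfolding LCg_def ladt_def by (cases l) (simp add: ladd_bound)

lemma finite_KS: "finite V \<Longrightarrow> finite (KS V)"
  unfolding KS_def by (intro finite_SigmaI finite_LadS) auto

lemma LC_closed:
  assumes "holes_inf V" "closedw g" "set g \<subseteq> V" "(d,l) \<in> KS V"
  shows "esum (LCg d l) g = 0"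
proof -
  let ?W = "Rd d ` V"
  obtain b aL aR cL cR where l: "l = (b,aL,aR,cL,cR)" by (cases l)
  have L: "is_lad ?W b aL aR cL cR" using assms(4) by (simp add: KS_def LadS_def l)
  have hW: "holes_inf ?W" by (rule good_holes[OF good_Rd assms(1)])
  have cg: "closedw (map (Rd d) g)" using assms(2) good_adjw[OF good_Rd]
    by (auto simp: closedw_def hd_map last_map)
  have sg: "set (map (Rd d) g) \<subseteq> ?W" using assms(3) by auto
  have e: "LCg d l = (\<lambda>x y. ladd b aL aR cL cR (Rd d x) (Rd d y))"
    by (simp add: fun_eq_iff LCg_def ladt_def l)
  have "esum (LCg d l) g = esum (ladd b aL aR cL cR) (map (Rd d) g)"
    by (simp add: esum_map e)
  also have "\<dots> = 0" by (rule ladder_zero[OF hW cg sg L])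
  finally show ?thesis .
qed

lemma use_bound:
  assumes "holes_inf V" "geod V ps" "(d,l) \<in> KS V"
  shows "esum (\<lambda>x y. \<bar>LCg d l x y\<bar>) ps \<le> 1"
proof -
  let ?W = "Rd d ` V"
  obtain b aL aR cL cR where l: "l = (b,aL,aR,cL,cR)" by (cases l)
  have L: "is_lad ?W b aL aR cL cR" using assms(3) by (simp add: KS_def LadS_def l)
  have hW: "holes_inf ?W" by (rule good_holes[OF good_Rd assms(1)])
  have G: "geod ?W (map (Rd d) ps)" by (rule good_geod[OF good_Rd assms(2)])
  have e: "LCg d l = (\<lambda>x y. ladd b aL aR cL cR (Rd d x) (Rd d y))"
    by (simp add: fun_eq_iff LCg_def ladt_def l)
  have "esum (\<lambda>x y. \<bar>LCg d l x y\<bar>) ps = esum (\<lambda>x y. \<bar>ladd b aL aR cL cR x y\<bar>) (map (Rd d) ps)"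
    by (simp add: esum_map e)
  also have "\<dots> \<le> 1" by (rule no_double_use[OF hW G L])
  finally show ?thesis .
qed

lemma abs_esum:
  assumes "esum (\<lambda>x y. \<bar>g x y\<bar>) ps \<le> 1" "\<And>x y. \<bar>g x y\<bar> \<le> 1"
  shows "\<bar>esum g ps\<bar> = esum (\<lambda>x y. \<bar>g x y\<bar>) ps"
  using assms(1)
proof (induction ps rule: adjw.induct)
  case (1 x y zs)
  have nn: "esum (\<lambda>x y. \<bar>g x y\<bar>) (y # zs) \<ge> 0" by (rule esum_nonneg) simp
  show ?case
  proof (cases "g x y = 0")
    case True then show ?thesis using 1 by simp
  next
    case False
    then have "\<bar>g x y\<bar> = 1" using assms(2)[of x y] by linarith
    then have "esum (\<lambda>x y. \<bar>g x y\<bar>) (y # zs) = 0" using 1(2) nn by simp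
    then have "esum g (y # zs) = 0" by (rule esum_abs_zero)
    then show ?thesis using \<open>\<bar>g x y\<bar> = 1\<close> \<open>esum (\<lambda>x y. \<bar>g x y\<bar>) (y # zs) = 0\<close> by simp
  qed
qed auto

lemma rows_count:
  assumes "tri_adj x y"
  shows "(\<Sum>d<3. (if snd (Rd d x) = snd (Rd d y) then 0 else 1::int)) = 2"
proof -
  have r: "Rd 0 = id" "Rd 1 = rot" "Rd 2 = rot \<circ> rot" by (simp_all add: Rd_def numeral_2_eq_2)
  have s: "(\<Sum>d<(3::nat). f d) = f 0 + f 1 + (f 2::int)" for f by (simp add: numeral_3_eq_3 numeral_2_eq_2)
  obtain a b where x: "x = (a,b)" by (cases x)
  have "tri_adj (a,b) y" using assms by (simp add: x)
  from tri_adj_disj[OF this] show ?thesis unfolding s r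
    by (elim disjE) (auto simp: x rot_def)
qed

lemma edge_total:
  assumes "finite V" "x \<in> V" "y \<in> V" "tri_adj x y"
  shows "(\<Sum>k\<in>KS V. \<bar>LCg (fst k) (snd k) x y\<bar>) = 2"
proof -
  have "(\<Sum>k\<in>KS V. \<bar>LCg (fst k) (snd k) x y\<bar>) = (\<Sum>d<3. \<Sum>l\<in>LadS (Rd d ` V). \<bar>ladt l (Rd d x) (Rd d y)\<bar>)"
    unfolding KS_def LCg_def
    by (subst sum.Sigma) (auto intro: finite_LadS assms(1) simp: split_beta)
  also have "\<dots> = (\<Sum>d<3. (if snd (Rd d x) = snd (Rd d y) then 0 else 1::int))"
  proof (rule sum.cong)
    fix d assume "d \<in> {..<3::nat}"
    have "tri_adj (Rd d x) (Rd d y) = tri_adj x y" using good_Rd[of d] unfolding good_def by blast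
    then have "tri_adj (Rd d x) (Rd d y)" using assms(4) by simp
    then show "(\<Sum>l\<in>LadS (Rd d ` V). \<bar>ladt l (Rd d x) (Rd d y)\<bar>) = (if snd (Rd d x) = snd (Rd d y) then 0 else 1)"
      using edge_count[of "Rd d ` V" "Rd d x" "Rd d y"] assms by auto
  qed simp
  also have "\<dots> = 2" by (rule rows_count[OF assms(4)])
  finally show ?thesis .
qed

lemma total_count:
  assumes "finite V" "walk V ps"
  shows "(\<Sum>k\<in>KS V. esum (\<lambda>x y. \<bar>LCg (fst k) (snd k) x y\<bar>) ps) = 2 * (int (length ps) - 1)"
proof -
  have "(\<Sum>k\<in>KS V. esum (\<lambda>x y. \<bar>LCg (fst k) (snd k) x y\<bar>) ps)
      = esum (\<lambda>x y. \<Sum>k\<in>KS V. \<bar>LCg (fst k) (snd k) x y\<bar>) ps"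
    by (rule esum_sum[symmetric])
  also have "\<dots> = esum (\<lambda>x y. 2) ps"
    using assms(2) by (intro esum_cong[of _ V]) (auto simp: walk_def edge_total[OF assms(1)])
  also have "\<dots> = 2 * (int (length ps) - 1)" using assms(2) by (simp add: esum_const walk_def)
  finally show ?thesis .
qed

definition basepath :: "node set \<Rightarrow> node \<Rightarrow> node \<Rightarrow> node list" where
  "basepath V u x = (SOME ps. walk V ps \<and> hd ps = u \<and> last ps = x)"

definition Phi :: "node set \<Rightarrow> node \<Rightarrow> nat \<times> (int \<times> int \<times> int \<times> int \<times> int) \<Rightarrow> node \<Rightarrow> int" where
  "Phi V u k x = esum (LCg (fst k) (snd k)) (basepath V u x)"

definition Tsum :: "node set \<Rightarrow> node \<Rightarrow> node \<Rightarrow> node \<Rightarrow> int" where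
  "Tsum V u x y = (\<Sum>k\<in>KS V. \<bar>Phi V u k y - Phi V u k x\<bar>)"

definition conn :: "node set \<Rightarrow> bool" where
  "conn V \<longleftrightarrow> (\<forall>x\<in>V. \<forall>y\<in>V. \<exists>ps. walk V ps \<and> hd ps = x \<and> last ps = y)"

lemma basepath:
  assumes "conn V" "u \<in> V" "x \<in> V"
  shows "walk V (basepath V u x) \<and> hd (basepath V u x) = u \<and> last (basepath V u x) = x"
proof -
  have "\<exists>ps. walk V ps \<and> hd ps = u \<and> last ps = x" using assms unfolding conn_def by blast
  then show ?thesis unfolding basepath_def by (rule someI_ex)
qed

lemma LC_walk:
  assumes "holes_inf V" "conn V" "u \<in> V" "walk V ps" "k \<in> KS V"
  shows "esum (LCg (fst k) (snd k)) ps = Phi V u k (last ps) - Phi V u k (hd ps)"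
proof -
  let ?g = "LCg (fst k) (snd k)"
  have hps: "hd ps \<in> V" "last ps \<in> V" using assms(4) by (auto simp: walk_def)
  define px where "px = basepath V u (hd ps)"
  define py where "py = basepath V u (last ps)"
  have px: "walk V px" "hd px = u" "last px = hd ps" using basepath[OF assms(2,3) hps(1)] px_def by auto
  have py: "walk V py" "hd py = u" "last py = last ps" using basepath[OF assms(2,3) hps(2)] py_def by auto
  have rpy: "walk V (rev py)" "hd (rev py) = last ps" "last (rev py) = u"
    using py adjw_rev by (auto simp: walk_def hd_rev last_rev)
  define A where "A = px @ tl ps"
  have wA: "walk V A" unfolding A_def by (rule walk_join[OF px(1) assms(4)]) (simp add: px)
  have hA: "hd A = u" "last A = last ps" unfolding A_def using join_hd_last[of px ps] px assms(4)
    by (auto simp: walk_def)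
  define C where "C = A @ tl (rev py)"
  have wC: "walk V C" unfolding C_def by (rule walk_join[OF wA rpy(1)]) (simp add: hA rpy)
  have hC: "hd C = u" "last C = u" unfolding C_def using join_hd_last[of A "rev py"] wA rpy hA
    by (auto simp: walk_def)
  have cC: "closedw C" using wC hC by (auto simp: closedw_def walk_def)
  have sC: "set C \<subseteq> V" using wC by (simp add: walk_def)
  have kk: "(fst k, snd k) \<in> KS V" using assms(5) by simp
  have "esum ?g C = 0" by (rule LC_closed[OF assms(1) cC sC kk])
  moreover have "esum ?g C = esum ?g A + esum ?g (rev py)"
    unfolding C_def by (rule esum_join) (use wA rpy hA in \<open>auto simp: walk_def\<close>)
  moreover have "esum ?g A = esum ?g px + esum ?g ps"
    unfolding A_def by (rule esum_join) (use px assms(4) in \<open>auto simp: walk_def\<close>)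
  moreover have "esum ?g (rev py) = - esum ?g py" by (rule esum_rev) (rule LCg_antisym)
  ultimately show ?thesis by (simp add: Phi_def px_def py_def)
qed

lemma path_between_walk: "path_between V x y ps \<longleftrightarrow> walk V ps \<and> hd ps = x \<and> last ps = y"
  unfolding path_between_def is_path_in_adjw walk_def by blast

lemma dist_le:
  assumes "path_between V x y ps"
  shows "dist_in V x y \<le> path_len ps"
  unfolding dist_in_def using assms by (intro Least_le) blast

lemma shortest_exists:
  assumes "conn V" "x \<in> V" "y \<in> V"
  shows "\<exists>ps. shortest_path V x y ps"
proof -
  obtain ps where "walk V ps" "hd ps = x" "last ps = y" using assms unfolding conn_def by blast
  then have "\<exists>n ps. path_between V x y ps \<and> path_len ps = n" by (auto simp: path_between_walk)
  then have "\<exists>ps. path_between V x y ps \<and> path_len ps = dist_in V x y"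
    unfolding dist_in_def by (rule LeastI_ex)
  then show ?thesis by (simp add: shortest_path_def)
qed

lemma shortest_geod:
  assumes "shortest_path V x y ps"
  shows "geod V ps"
proof -
  have pb: "path_between V x y ps" and pl: "path_len ps = dist_in V x y"
    using assms by (auto simp: shortest_path_def)
  have "length ps \<le> length qs" if "walk V qs" "hd qs = hd ps" "last qs = last ps" for qs
  proof -
    have "path_between V x y qs" using that pb by (auto simp: path_between_walk)
    then have "path_len ps \<le> path_len qs" using dist_le pl by simp
    moreover have "qs \<noteq> []" "ps \<noteq> []" using that pb by (auto simp: walk_def path_between_walk)
    ultimately show ?thesis by (cases ps; cases qs) (auto simp: path_len_def)
  qed
  then show ?thesis using pb by (auto simp: geod_def path_between_walk)
qed

lemma dist_formula:
  assumes "holes_inf V" "finite V" "conn V" "u \<in> V" "shortest_path V x y ps"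
  shows "2 * int (dist_in V x y) = Tsum V u x y"
proof -
  have G: "geod V ps" by (rule shortest_geod[OF assms(5)])
  have pb: "path_between V x y ps" and pl: "path_len ps = dist_in V x y"
    using assms(5) by (auto simp: shortest_path_def)
  have w: "walk V ps" "hd ps = x" "last ps = y" using pb by (auto simp: path_between_walk)
  have "Tsum V u x y = (\<Sum>k\<in>KS V. esum (\<lambda>a b. \<bar>LCg (fst k) (snd k) a b\<bar>) ps)"
    unfolding Tsum_def
  proof (rule sum.cong)
    fix k assume k: "k \<in> KS V"
    have "\<bar>Phi V u k y - Phi V u k x\<bar> = \<bar>esum (LCg (fst k) (snd k)) ps\<bar>"
      using LC_walk[OF assms(1,3,4) w(1) k] w by simp
    also have "\<dots> = esum (\<lambda>a b. \<bar>LCg (fst k) (snd k) a b\<bar>) ps"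
      using use_bound[OF assms(1) G, of "fst k" "snd k"] k by (intro abs_esum LCg_bound) simp
    finally show "\<bar>Phi V u k y - Phi V u k x\<bar> = esum (\<lambda>a b. \<bar>LCg (fst k) (snd k) a b\<bar>) ps" .
  qed simp
  also have "\<dots> = 2 * (int (length ps) - 1)" by (rule total_count[OF assms(2) w(1)])
  moreover have "length ps \<ge> 1" using w(1) by (cases ps) (auto simp: walk_def)
  moreover have "dist_in V x y = length ps - 1" using pl by (simp add: path_len_def)
  ultimately show ?thesis by (simp add: of_nat_diff)
qed

lemma split_path:
  assumes "path_between V x y ps" "w \<in> set ps"
  shows "dist_in V x w + dist_in V w y \<le> path_len ps"
proof -
  have w: "walk V ps" "hd ps = x" "last ps = y" using assms(1) by (auto simp: path_between_walk)
  obtain i where i: "i < length ps" "ps ! i = w" using assms(2) by (auto simp: in_set_conv_nth)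
  have ne: "ps \<noteq> []" using w by (simp add: walk_def)
  have a1: "adjw (take (Suc i) ps @ drop (Suc i) ps)" using w by (simp add: walk_def)
  have a2: "adjw (take i ps @ drop i ps)" using w by (simp add: walk_def)
  let ?p1 = "take (Suc i) ps" and ?p2 = "drop i ps"
  have "walk V ?p1" using a1 w ne unfolding walk_def adjw_append
    by (auto dest: in_set_takeD)
  moreover have "hd ?p1 = x" using w ne by simp
  moreover have "last ?p1 = w" using i by (simp add: take_Suc_conv_app_nth)
  ultimately have d1: "dist_in V x w \<le> path_len ?p1" by (intro dist_le) (simp add: path_between_walk)
  have "walk V ?p2" using a2 w i unfolding walk_def adjw_append
    by (auto dest: in_set_dropD)
  moreover have "hd ?p2 = w" using i by (simp add: hd_drop_conv_nth)
  moreover have "last ?p2 = y" using i w by simp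
  ultimately have d2: "dist_in V w y \<le> path_len ?p2" by (intro dist_le) (simp add: path_between_walk)
  have l1: "length ?p1 = Suc i" "length ?p2 = length ps - i" using i by auto
  have "path_len ?p1 + path_len ?p2 = path_len ps" unfolding path_len_def l1 using i by linarith
  then show ?thesis using d1 d2 by linarith
qed

lemma join_path:
  assumes "path_between V x w p1" "path_between V w y p2"
  shows "path_between V x y (p1 @ tl p2) \<and> path_len (p1 @ tl p2) = path_len p1 + path_len p2"
proof -
  have w1: "walk V p1" "hd p1 = x" "last p1 = w" and w2: "walk V p2" "hd p2 = w" "last p2 = y"
    using assms by (auto simp: path_between_walk)
  have "walk V (p1 @ tl p2)" by (rule walk_join[OF w1(1) w2(1)]) (simp add: w1 w2)
  moreover have "hd (p1 @ tl p2) = x" "last (p1 @ tl p2) = y"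
    using join_hd_last[of p1 p2] w1 w2 by (auto simp: walk_def)
  moreover have "path_len (p1 @ tl p2) = path_len p1 + path_len p2"
    using w1 w2 by (cases p1; cases p2) (auto simp: walk_def path_len_def)
  ultimately show ?thesis by (simp add: path_between_walk)
qed

lemma btw_iff: "\<bar>b - a\<bar> + \<bar>c - b\<bar> = \<bar>c - a\<bar> \<longleftrightarrow> min a c \<le> b \<and> b \<le> max a c" for a b c :: int
  by (cases "a \<le> b"; cases "b \<le> c"; cases "a \<le> c") (simp_all add: min_def max_def)

lemma between_int:
  fixes u v x y w :: int
  assumes "\<bar>w - x\<bar> + \<bar>y - w\<bar> = \<bar>y - x\<bar>" "\<bar>x - u\<bar> + \<bar>v - x\<bar> = \<bar>v - u\<bar>" "\<bar>y - u\<bar> + \<bar>v - y\<bar> = \<bar>v - u\<bar>"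
  shows "\<bar>w - u\<bar> + \<bar>v - w\<bar> = \<bar>v - u\<bar>"
proof -
  have 1: "min x y \<le> w" "w \<le> max x y" using assms(1) unfolding btw_iff by auto
  have 2: "min u v \<le> x" "x \<le> max u v" using assms(2) unfolding btw_iff by auto
  have 3: "min u v \<le> y" "y \<le> max u v" using assms(3) unfolding btw_iff by auto
  have "min u v \<le> min x y" using 2 3 by simp
  moreover have "max x y \<le> max u v" using 2 3 by simp
  ultimately have "min u v \<le> w \<and> w \<le> max u v" using 1 by linarith
  then show ?thesis unfolding btw_iff .
qed

lemma tri_abs: "\<bar>c - a\<bar> \<le> \<bar>b - a\<bar> + \<bar>c - b\<bar>" for a b c :: int
  using abs_triangle_ineq[of "b - a" "c - b"] by simp

lemma Tsum_triangle:
  "Tsum V u a c \<le> Tsum V u a b + Tsum V u b c"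
  unfolding Tsum_def sum.distrib[symmetric] by (rule sum_mono) (rule tri_abs)

lemma termwise:
  assumes "finite V" "Tsum V u a b + Tsum V u b c \<le> Tsum V u a c" "k \<in> KS V"
  shows "\<bar>Phi V u k b - Phi V u k a\<bar> + \<bar>Phi V u k c - Phi V u k b\<bar> = \<bar>Phi V u k c - Phi V u k a\<bar>"
proof -
  let ?f = "\<lambda>k. \<bar>Phi V u k b - Phi V u k a\<bar> + \<bar>Phi V u k c - Phi V u k b\<bar> - \<bar>Phi V u k c - Phi V u k a\<bar>"
  have nn: "\<forall>k\<in>KS V. ?f k \<ge> 0"
  proof
    fix k show "?f k \<ge> 0"
      using tri_abs[where a="Phi V u k a" and b="Phi V u k b" and c="Phi V u k c"] by linarith
  qed
  have "sum ?f (KS V) = Tsum V u a b + Tsum V u b c - Tsum V u a c"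
    unfolding Tsum_def by (simp only: sum.distrib sum_subtractf)
  moreover have "Tsum V u a c \<le> Tsum V u a b + Tsum V u b c" by (rule Tsum_triangle)
  ultimately have "sum ?f (KS V) = 0" using assms(2) by linarith
  moreover have "(sum ?f (KS V) = 0) = (\<forall>k\<in>KS V. ?f k = 0)"
    by (rule sum_nonneg_eq_0_iff[OF finite_KS[OF assms(1)]]) (use nn in blast)
  ultimately have "?f k = 0" using assms(3) by blast
  then show ?thesis by linarith
qed

lemma conn_of:
  assumes "tri_grid_graph V"
  shows "conn V"
  using assms unfolding tri_grid_graph_def conn_def connected_in_def path_between_walk by blast

theorem mainTheorem1:
  fixes V :: "node set" and u v :: node
  assumes "simple_tri_grid_graph V"
    and "u \<in> V" and "v \<in> V"
  shows "geodesically_convex V (U_set V u v)"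
  unfolding geodesically_convex_def
proof (intro ballI allI impI subsetI)
  have tg: "tri_grid_graph V" and hi: "holes_inf V"
    using assms(1) by (auto simp: simple_tri_grid_graph_def holes_inf_def)
  have fin: "finite V" using tg by (simp add: tri_grid_graph_def)
  have cn: "conn V" by (rule conn_of[OF tg])
  let ?D = "dist_in V" and ?T = "Tsum V u"
  have DT: "2 * int (?D a b) = ?T a b" if ab: "a \<in> V" "b \<in> V" for a b
  proof -
    obtain ps where "shortest_path V a b ps" using shortest_exists[OF cn ab] by blast
    then show ?thesis by (rule dist_formula[OF hi fin cn assms(2)])
  qed
  have onU: "?D u z + ?D z v = ?D u v \<and> z \<in> V" if zU: "z \<in> U_set V u v" for z
  proof -
    obtain ps where ps: "shortest_path V u v ps" "z \<in> set ps" using zU by (auto simp: U_set_def)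
    have zV: "z \<in> V" using ps by (auto simp: shortest_path_def path_between_def is_path_in_def)
    have "?D u z + ?D z v \<le> ?D u v" using split_path[of V u v ps z] ps by (simp add: shortest_path_def)
    moreover have "?T u v \<le> ?T u z + ?T z v" by (rule Tsum_triangle)
    ultimately show ?thesis using DT[OF assms(2) zV] DT[OF zV assms(3)] DT[OF assms(2,3)] zV by linarith
  qed
  fix x y ps w
  assume xU: "x \<in> U_set V u v" and yU: "y \<in> U_set V u v" and sp: "shortest_path V x y ps" and wps: "w \<in> set ps"
  have xV: "x \<in> V" and yV: "y \<in> V" using onU xU yU by auto
  have wV: "w \<in> V" using sp wps by (auto simp: shortest_path_def path_between_def is_path_in_def)
  have "?D x w + ?D w y \<le> ?D x y" using split_path[of V x y ps w] sp wps by (simp add: shortest_path_def)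
  then have Txy: "?T x w + ?T w y \<le> ?T x y" using DT[OF xV wV] DT[OF wV yV] DT[OF xV yV] by linarith
  have Tx: "?T u x + ?T x v \<le> ?T u v" using onU[OF xU] DT[OF assms(2) xV] DT[OF xV assms(3)] DT[OF assms(2,3)] by linarith
  have Ty: "?T u y + ?T y v \<le> ?T u v" using onU[OF yU] DT[OF assms(2) yV] DT[OF yV assms(3)] DT[OF assms(2,3)] by linarith
  have "?T u w + ?T w v = ?T u v"
    unfolding Tsum_def sum.distrib[symmetric]
  proof (rule sum.cong)
    fix k assume k: "k \<in> KS V"
    show "\<bar>Phi V u k w - Phi V u k u\<bar> + \<bar>Phi V u k v - Phi V u k w\<bar> = \<bar>Phi V u k v - Phi V u k u\<bar>"
      by (rule between_int[OF termwise[OF fin Txy k] termwise[OF fin Tx k] termwise[OF fin Ty k]])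
  qed simp
  then have Dw: "?D u w + ?D w v = ?D u v" using DT[OF assms(2) wV] DT[OF wV assms(3)] DT[OF assms(2,3)] by linarith
  obtain p1 where p1: "shortest_path V u w p1" using shortest_exists[OF cn assms(2) wV] by blast
  obtain p2 where p2: "shortest_path V w v p2" using shortest_exists[OF cn wV assms(3)] by blast
  have j: "path_between V u v (p1 @ tl p2) \<and> path_len (p1 @ tl p2) = path_len p1 + path_len p2"
    using join_path[of V u w p1 v p2] p1 p2 by (simp add: shortest_path_def)
  then have "shortest_path V u v (p1 @ tl p2)" using p1 p2 Dw by (simp add: shortest_path_def)
  moreover have "w \<in> set (p1 @ tl p2)" using p1 by (auto simp: shortest_path_def path_between_walk walk_def)
  ultimately show "w \<in> U_set V u v" by (auto simp: U_set_def)
qed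

end
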